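(* Let $(A,+,\circ)$ be a finite left brace with cyclic additive group, let $(A,\cdot)$ be its decomposable associated cycle set, let $g$ be an element of a transitive cycle base of $A$, and let $(A,\bullet)$ be the uniconnected associated cycle set $a\bullet b:=\lambda_a(g)^{-}\circ b$. Then $(A,\cdot)$ and $(A,\bullet)$ have finite multipermutation level and $mpl(A,\cdot)=mpl(A,\bullet)$. Moreover, for every $n\in\mathbb{N}$, the underlying sets of $\mathrm{Ret}^n(A,\cdot)$ and $\mathrm{Ret}^n(A,\bullet)$ coincide (as quotients of $A$).
   Context: A left brace is a set $A$ with two operations such that $(A,+)$ is an abelian group, $(A,\circ)$ is a group, and $a\circ(b+c)=a\circ b-a+a\circ c$. $\lambda_a(b):=-a+a\circ b$; $a\mapsto\lambda_a$ is a homomorphism $(A,\circ)\to\mathrm{Aut}(A,+)$. $a^{-}$ is the inverse in $(A,\circ)$. A transitive cycle base is a single $\lambda$-orbit generating $(A,+)$. A (non-degenerate) cycle set is a set $X$ with an operation such that each $\sigma_x:y\mapsto x\cdot y$ is bijective, $(x\cdot y)\cdot(x\cdot z)=(y\cdot x)\cdot(y\cdot z)$, and $x\mapsto x\cdot x$ is bijective. $\mathrm{Ret}(X)$ is the quotient cycle set of $X$ by $x\sim y\iff\sigma_x=\sigma_y$; $\mathrm{Ret}^0(X)=X$, $\mathrm{Ret}^i(X)=\mathrm{Ret}(\mathrm{Ret}^{i-1}(X))$; $mpl(X)$ is the least $n$ with $|\mathrm{Ret}^n(X)|=1$ (finite multipermutation level means such $n$ exists). The decomposable associated cycle set is $(A,\cdot)$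 with $a\cdot b:=\lambda_a^{-1}(b)$. The cycle set $(A,\bullet)$ is uniconnected, i.e. the group generated by its left multiplications acts regularly on $A$. *)

theory Defs
  imports "HOL-Algebra.Algebra"
begin

definition addG :: "'a set \<Rightarrow> ('a \<Rightarrow> 'a \<Rightarrow> 'a) \<Rightarrow> 'a \<Rightarrow> 'a monoid" where
  "addG A pl z = \<lparr>carrier = A, monoid.mult = pl, one = z\<rparr>"

definition circG :: "'a set \<Rightarrow> ('a \<Rightarrow> 'a \<Rightarrow> 'a) \<Rightarrow> 'a \<Rightarrow> 'a monoid" where
  "circG A circ u = \<lparr>carrier = A, monoid.mult = circ, one = u\<rparr>"

definition left_brace :: "'a set \<Rightarrow> ('a \<Rightarrow> 'a \<Rightarrow> 'a) \<Rightarrow> 'a \<Rightarrow> ('a \<Rightarrow> 'a \<Rightarrow> 'a) \<Rightarrow> 'a \<Rightarrow> bool" where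
  "left_brace A pl z circ u \<longleftrightarrow>
     comm_group (addG A pl z) \<and> group (circG A circ u) \<and>
     (\<forall>a\<in>A. \<forall>b\<in>A. \<forall>c\<in>A.
        circ a (pl b c) = pl (pl (circ a b) (inv\<^bsub>addG A pl z\<^esub> a)) (circ a c))"

definition brace_lambda :: "'a set \<Rightarrow> ('a \<Rightarrow> 'a \<Rightarrow> 'a) \<Rightarrow> 'a \<Rightarrow> ('a \<Rightarrow> 'a \<Rightarrow> 'a) \<Rightarrow> 'a \<Rightarrow> 'a \<Rightarrow> 'a" where
  "brace_lambda A pl z circ a b = pl (inv\<^bsub>addG A pl z\<^esub> a) (circ a b)"

definition transitive_cycle_base ::
  "'a set \<Rightarrow> ('a \<Rightarrow> 'a \<Rightarrow> 'a) \<Rightarrow> 'a \<Rightarrow> ('a \<Rightarrow> 'a \<Rightarrow> 'a) \<Rightarrow> 'a set \<Rightarrow> bool" where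
  "transitive_cycle_base A pl z circ S \<longleftrightarrow>
     S \<subseteq> A \<and> (\<exists>y\<in>S. S = (\<lambda>a. brace_lambda A pl z circ a y) ` A) \<and>
     generate (addG A pl z) S = A"

definition decomp_cs_op :: "'a set \<Rightarrow> ('a \<Rightarrow> 'a \<Rightarrow> 'a) \<Rightarrow> 'a \<Rightarrow> ('a \<Rightarrow> 'a \<Rightarrow> 'a) \<Rightarrow> 'a \<Rightarrow> 'a \<Rightarrow> 'a" where
  "decomp_cs_op A pl z circ a b = inv_into A (brace_lambda A pl z circ a) b"

definition unicon_cs_op ::
  "'a set \<Rightarrow> ('a \<Rightarrow> 'a \<Rightarrow> 'a) \<Rightarrow> 'a \<Rightarrow> ('a \<Rightarrow> 'a \<Rightarrow> 'a) \<Rightarrow> 'a \<Rightarrow> 'a \<Rightarrow> 'a \<Rightarrow> 'a \<Rightarrow> 'a" where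
  "unicon_cs_op A pl z circ u g a b =
     circ (inv\<^bsub>circG A circ u\<^esub> (brace_lambda A pl z circ a g)) b"

text \<open>A quotient cycle set of S is represented by a partition Q of S (a set of classes)
  together with the induced operation on classes.  Ret identifies classes with equal
  left multiplications; the new classes are unions of old classes, so Ret^n(S) is
  represented as a partition of S.\<close>

definition ret_class :: "'a set set \<Rightarrow> ('a set \<Rightarrow> 'a set \<Rightarrow> 'a set) \<Rightarrow> 'a set \<Rightarrow> 'a set" where
  "ret_class Q f C = \<Union>{D\<in>Q. \<forall>E\<in>Q. f D E = f C E}"

definition ret_step :: "'a set set \<times> ('a set \<Rightarrow> 'a set \<Rightarrow> 'a set)
    \<Rightarrow> 'a set set \<times> ('a set \<Rightarrow> 'a set \<Rightarrow> 'a set)" where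
  "ret_step P = (case P of (Q, f) \<Rightarrow>
     (ret_class Q f ` Q,
      \<lambda>C' D'. ret_class Q f (f (SOME C. C \<in> Q \<and> C \<subseteq> C') (SOME D. D \<in> Q \<and> D \<subseteq> D'))))"

fun Ret_iter :: "'a set \<Rightarrow> ('a \<Rightarrow> 'a \<Rightarrow> 'a) \<Rightarrow> nat
    \<Rightarrow> 'a set set \<times> ('a set \<Rightarrow> 'a set \<Rightarrow> 'a set)" where
  "Ret_iter S op 0 = ((\<lambda>x. {x}) ` S, \<lambda>C D. {op (SOME x. x \<in> C) (SOME y. y \<in> D)})"
| "Ret_iter S op (Suc n) = ret_step (Ret_iter S op n)"

definition finite_mpl :: "'a set \<Rightarrow> ('a \<Rightarrow> 'a \<Rightarrow> 'a) \<Rightarrow> bool" where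
  "finite_mpl S op \<longleftrightarrow> (\<exists>n. card (fst (Ret_iter S op n)) = 1)"

definition mpl :: "'a set \<Rightarrow> ('a \<Rightarrow> 'a \<Rightarrow> 'a) \<Rightarrow> nat" where
  "mpl S op = (LEAST n. card (fst (Ret_iter S op n)) = 1)"

end

theory Submission
  imports Defs
begin

lemma Ret_generic:
  fixes A :: "'a set" and op :: "'a \<Rightarrow> 'a \<Rightarrow> 'a" and R :: "nat \<Rightarrow> 'a \<Rightarrow> 'a \<Rightarrow> bool"
  assumes cl: "\<And>a b. a\<in>A \<Longrightarrow> b\<in>A \<Longrightarrow> op a b \<in> A"
  and h0: "\<And>a b. a\<in>A \<Longrightarrow> b\<in>A \<Longrightarrow> R 0 a b \<longleftrightarrow> a = b"
  and hS: "\<And>n a b. a\<in>A \<Longrightarrow> b\<in>A \<Longrightarrow> R (Suc n) a b \<longleftrightarrow> (\<forall>c\<in>A. R n (op a c) (op b c))"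
  and dom: "\<And>n a b. R n a b \<Longrightarrow> a\<in>A \<and> b\<in>A"
  and rfl: "\<And>n a. a\<in>A \<Longrightarrow> R n a a"
  and sym: "\<And>n a b. R n a b \<Longrightarrow> R n b a"
  and trans: "\<And>n a b c. R n a b \<Longrightarrow> R n b c \<Longrightarrow> R n a c"
  and cong: "\<And>n a a' c c'. R n a a' \<Longrightarrow> R n c c' \<Longrightarrow> R n (op a c) (op a' c')"
  shows "fst (Ret_iter A op n) = (\<lambda>a. {b\<in>A. R n a b}) ` A \<and>
     (\<forall>a\<in>A. \<forall>c\<in>A. snd (Ret_iter A op n) {b\<in>A. R n a b} {b\<in>A. R n c b} = {b\<in>A. R n (op a c) b})"
proof (induction n)
  case 0
  have e: "\<And>a. a \<in> A \<Longrightarrow> {b\<in>A. R 0 a b} = {a}" using h0 by auto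
  have "(\<lambda>x. {x}) ` A = (\<lambda>a. {b\<in>A. R 0 a b}) ` A" using e by (auto simp: image_def)
  moreover have "\<forall>a\<in>A. \<forall>c\<in>A. snd (Ret_iter A op 0) {b\<in>A. R 0 a b} {b\<in>A. R 0 c b} = {b\<in>A. R 0 (op a c) b}"
    using e cl by simp
  ultimately show ?case by simp
next
  case (Suc n)
  define cls where "cls m a = {b\<in>A. R m a b}" for m a
  have cls_eq: "\<And>m a b. a\<in>A \<Longrightarrow> b\<in>A \<Longrightarrow> cls m a = cls m b \<longleftrightarrow> R m a b"
  proof -
    fix m a b assume a: "a\<in>A" "b\<in>A"
    show "cls m a = cls m b \<longleftrightarrow> R m a b"
    proof
      assume "cls m a = cls m b"
      then have "b \<in> cls m a" using a rfl unfolding cls_def by auto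
      then show "R m a b" unfolding cls_def by auto
    next
      assume "R m a b"
      then show "cls m a = cls m b" unfolding cls_def using sym trans by blast
    qed
  qed
  have mono: "\<And>m a b. R m a b \<Longrightarrow> R (Suc m) a b"
    using hS dom cong rfl by metis
  obtain Q f where Qf: "Ret_iter A op n = (Q, f)" by (cases "Ret_iter A op n") auto
  have Q: "Q = cls n ` A" and f: "\<And>a c. a\<in>A \<Longrightarrow> c\<in>A \<Longrightarrow> f (cls n a) (cls n c) = cls n (op a c)"
    using Suc.IH Qf unfolding cls_def by auto
  have key: "ret_class Q f (cls n a) = cls (Suc n) a" if a: "a \<in> A" for a
  proof
    show "ret_class Q f (cls n a) \<subseteq> cls (Suc n) a"
    proof
      fix x assume "x \<in> ret_class Q f (cls n a)"
      then obtain D where D: "D \<in> Q" "\<forall>E\<in>Q. f D E = f (cls n a) E" "x \<in> D"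
        unfolding ret_class_def by auto
      then obtain b where b: "b \<in> A" "D = cls n b" using Q by auto
      have "\<forall>e\<in>A. R n (op b e) (op a e)"
      proof
        fix e assume e: "e \<in> A"
        have "f D (cls n e) = f (cls n a) (cls n e)" using D Q e by auto
        then have "cls n (op b e) = cls n (op a e)" using f b a e by simp
        then show "R n (op b e) (op a e)" using cls_eq cl a b e by blast
      qed
      then have "R (Suc n) b a" using hS a b by blast
      moreover have "R (Suc n) b x" using D b mono unfolding cls_def by auto
      ultimately show "x \<in> cls (Suc n) a" unfolding cls_def using sym trans dom by blast
    qed
  next
    show "cls (Suc n) a \<subseteq> ret_class Q f (cls n a)"
    proof
      fix x assume x: "x \<in> cls (Suc n) a"
      then have xA: "x \<in> A" and Rax: "R (Suc n) a x" unfolding cls_def by auto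
      have "cls n x \<in> Q" using Q xA by auto
      moreover have "\<forall>E\<in>Q. f (cls n x) E = f (cls n a) E"
      proof
        fix E assume "E \<in> Q"
        then obtain e where e: "e\<in>A" "E = cls n e" using Q by auto
        have "R n (op a e) (op x e)" using hS Rax a xA e by blast
        then show "f (cls n x) E = f (cls n a) E" using f e a xA cls_eq cl by metis
      qed
      moreover have "x \<in> cls n x" using xA rfl unfolding cls_def by auto
      ultimately show "x \<in> ret_class Q f (cls n a)" unfolding ret_class_def by blast
    qed
  qed
  have fst_eq: "fst (Ret_iter A op (Suc n)) = cls (Suc n) ` A"
    using Qf Q key by (force simp: ret_step_def image_image)
  have snd_eq: "snd (Ret_iter A op (Suc n)) (cls (Suc n) a) (cls (Suc n) c) = cls (Suc n) (op a c)"
    if a: "a\<in>A" and c: "c\<in>A" for a c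
  proof -
    have ex: "\<exists>C. C \<in> Q \<and> C \<subseteq> cls (Suc n) y" if "y \<in> A" for y
      using that Q mono unfolding cls_def by blast
    define C0 where "C0 = (SOME C. C \<in> Q \<and> C \<subseteq> cls (Suc n) a)"
    define D0 where "D0 = (SOME C. C \<in> Q \<and> C \<subseteq> cls (Suc n) c)"
    have C0: "C0 \<in> Q \<and> C0 \<subseteq> cls (Suc n) a" unfolding C0_def using someI_ex[OF ex[OF a]] .
    have D0: "D0 \<in> Q \<and> D0 \<subseteq> cls (Suc n) c" unfolding D0_def using someI_ex[OF ex[OF c]] .
    obtain a0 where a0: "a0 \<in> A" "C0 = cls n a0" using C0 Q by auto
    obtain c0 where c0: "c0 \<in> A" "D0 = cls n c0" using D0 Q by auto
    have "a0 \<in> cls (Suc n) a" using C0 a0 rfl unfolding cls_def by auto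
    then have Ra: "R (Suc n) a a0" unfolding cls_def by auto
    have "c0 \<in> cls (Suc n) c" using D0 c0 rfl unfolding cls_def by auto
    then have Rc: "R (Suc n) c c0" unfolding cls_def by auto
    have "snd (Ret_iter A op (Suc n)) (cls (Suc n) a) (cls (Suc n) c) = ret_class Q f (f C0 D0)"
      using Qf unfolding C0_def D0_def by (simp add: ret_step_def)
    also have "\<dots> = ret_class Q f (cls n (op a0 c0))" using f a0 c0 by simp
    also have "\<dots> = cls (Suc n) (op a0 c0)" using key cl a0 c0 by simp
    also have "\<dots> = cls (Suc n) (op a c)" using cls_eq cong[OF Ra Rc] cl a c a0 c0 by metis
    finally show ?thesis .
  qed
  show ?case using fst_eq snd_eq unfolding cls_def by blast
qed


locale cb =
  fixes A :: "'a set" and pl :: "'a \<Rightarrow> 'a \<Rightarrow> 'a" and z :: 'a and circ :: "'a \<Rightarrow> 'a \<Rightarrow> 'a" and u :: 'a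
  assumes lb: "left_brace A pl z circ u"
begin

abbreviation neg where "neg x \<equiv> inv\<^bsub>addG A pl z\<^esub> x"
abbreviation ci where "ci x \<equiv> inv\<^bsub>circG A circ u\<^esub> x"
abbreviation lam where "lam \<equiv> brace_lambda A pl z circ"

lemma addcg: "comm_group (addG A pl z)" using lb unfolding left_brace_def by auto
lemma circg: "group (circG A circ u)" using lb unfolding left_brace_def by auto
lemma distr: "a\<in>A \<Longrightarrow> b\<in>A \<Longrightarrow> c\<in>A \<Longrightarrow> circ a (pl b c) = pl (pl (circ a b) (neg a)) (circ a c)"
  using lb unfolding left_brace_def by auto

lemma pl_closed[simp]: "a\<in>A \<Longrightarrow> b\<in>A \<Longrightarrow> pl a b \<in> A"
  using monoid.m_closed[of "addG A pl z"] addcg by (simp add: addG_def comm_group_def comm_monoid_def)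
lemma z_in[simp]: "z \<in> A"
  using monoid.one_closed[of "addG A pl z"] addcg by (simp add: addG_def comm_group_def comm_monoid_def)
lemma neg_closed[simp]: "a\<in>A \<Longrightarrow> neg a \<in> A"
  using group.inv_closed[of "addG A pl z"] addcg by (simp add: addG_def comm_group_def)
lemma pl_assoc: "a\<in>A \<Longrightarrow> b\<in>A \<Longrightarrow> c\<in>A \<Longrightarrow> pl (pl a b) c = pl a (pl b c)"
  using monoid.m_assoc[of "addG A pl z"] addcg by (simp add: addG_def comm_group_def comm_monoid_def)
lemma pl_comm: "a\<in>A \<Longrightarrow> b\<in>A \<Longrightarrow> pl a b = pl b a"
  using comm_monoid.m_comm[of "addG A pl z"] addcg by (simp add: addG_def comm_group_def)
lemma pl_lcomm: "a\<in>A \<Longrightarrow> b\<in>A \<Longrightarrow> c\<in>A \<Longrightarrow> pl a (pl b c) = pl b (pl a c)"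
proof -
  assume a: "a\<in>A" "b\<in>A" "c\<in>A"
  have "pl a (pl b c) = pl (pl a b) c" using a by (simp add: pl_assoc)
  also have "\<dots> = pl (pl b a) c" using a pl_comm[of a b] by simp
  also have "\<dots> = pl b (pl a c)" using a by (simp add: pl_assoc)
  finally show ?thesis .
qed
lemmas pl_ac = pl_assoc pl_comm pl_lcomm
lemma z_l[simp]: "a\<in>A \<Longrightarrow> pl z a = a"
  using monoid.l_one[of "addG A pl z"] addcg by (simp add: addG_def comm_group_def comm_monoid_def)
lemma z_r[simp]: "a\<in>A \<Longrightarrow> pl a z = a"
  using monoid.r_one[of "addG A pl z"] addcg by (simp add: addG_def comm_group_def comm_monoid_def)
lemma neg_l[simp]: "a\<in>A \<Longrightarrow> pl (neg a) a = z"
  using group.l_inv[of "addG A pl z"] addcg by (simp add: addG_def comm_group_def)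
lemma neg_r[simp]: "a\<in>A \<Longrightarrow> pl a (neg a) = z"
  using group.r_inv[of "addG A pl z"] addcg by (simp add: addG_def comm_group_def)
lemma neg_l2[simp]: "a\<in>A \<Longrightarrow> b\<in>A \<Longrightarrow> pl (neg a) (pl a b) = b"
  by (metis neg_closed neg_l pl_assoc z_l)
lemma neg_r2[simp]: "a\<in>A \<Longrightarrow> b\<in>A \<Longrightarrow> pl a (pl (neg a) b) = b"
  by (metis neg_closed neg_r pl_assoc z_l)
lemma neg_neg[simp]: "a\<in>A \<Longrightarrow> neg (neg a) = a"
  using group.inv_inv[of "addG A pl z"] addcg by (simp add: addG_def comm_group_def)
lemma neg_pl[simp]: "a\<in>A \<Longrightarrow> b\<in>A \<Longrightarrow> neg (pl a b) = pl (neg a) (neg b)"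
  using comm_group.inv_mult[of "addG A pl z"] addcg pl_comm by (simp add: addG_def)
lemma neg_z[simp]: "neg z = z"
  using monoid.inv_one[of "addG A pl z"] addcg by (simp add: addG_def comm_group_def group_def)
lemma neg_unique: "a\<in>A \<Longrightarrow> b\<in>A \<Longrightarrow> pl a b = z \<Longrightarrow> neg a = b"
  by (metis neg_l2 neg_closed z_r)
lemma pl_cancel_l: "a\<in>A \<Longrightarrow> b\<in>A \<Longrightarrow> c\<in>A \<Longrightarrow> pl a b = pl a c \<longleftrightarrow> b = c"
proof -
  assume a: "a\<in>A" "b\<in>A" "c\<in>A"
  show ?thesis
  proof
    assume "pl a b = pl a c"
    then have "pl (neg a) (pl a b) = pl (neg a) (pl a c)" by simp
    then show "b = c" using a by simp
  qed simp
qed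

lemma circ_closed[simp]: "a\<in>A \<Longrightarrow> b\<in>A \<Longrightarrow> circ a b \<in> A"
  using monoid.m_closed[of "circG A circ u"] circg by (simp add: circG_def group_def)
lemma u_in[simp]: "u \<in> A"
  using monoid.one_closed[of "circG A circ u"] circg by (simp add: circG_def group_def)
lemma ci_closed[simp]: "a\<in>A \<Longrightarrow> ci a \<in> A"
  using group.inv_closed[of "circG A circ u"] circg by (simp add: circG_def)
lemma circ_assoc[simp]: "a\<in>A \<Longrightarrow> b\<in>A \<Longrightarrow> c\<in>A \<Longrightarrow> circ (circ a b) c = circ a (circ b c)"
  using monoid.m_assoc[of "circG A circ u"] circg by (simp add: circG_def group_def)
lemma u_l[simp]: "a\<in>A \<Longrightarrow> circ u a = a"
  using monoid.l_one[of "circG A circ u"] circg by (simp add: circG_def group_def)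
lemma u_r[simp]: "a\<in>A \<Longrightarrow> circ a u = a"
  using monoid.r_one[of "circG A circ u"] circg by (simp add: circG_def group_def)
lemma ci_l[simp]: "a\<in>A \<Longrightarrow> circ (ci a) a = u"
  using group.l_inv[of "circG A circ u"] circg by (simp add: circG_def)
lemma ci_r[simp]: "a\<in>A \<Longrightarrow> circ a (ci a) = u"
  using group.r_inv[of "circG A circ u"] circg by (simp add: circG_def)
lemma ci_l2[simp]: "a\<in>A \<Longrightarrow> b\<in>A \<Longrightarrow> circ (ci a) (circ a b) = b"
  by (metis ci_closed ci_l circ_assoc u_l)
lemma ci_r2[simp]: "a\<in>A \<Longrightarrow> b\<in>A \<Longrightarrow> circ a (circ (ci a) b) = b"
  by (metis ci_closed ci_r circ_assoc u_l)
lemma ci_ci[simp]: "a\<in>A \<Longrightarrow> ci (ci a) = a"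
  using group.inv_inv[of "circG A circ u"] circg by (simp add: circG_def)
lemma ci_circ[simp]: "a\<in>A \<Longrightarrow> b\<in>A \<Longrightarrow> ci (circ a b) = circ (ci b) (ci a)"
  using group.inv_mult_group[of "circG A circ u"] circg by (simp add: circG_def)
lemma ci_u[simp]: "ci u = u"
  using monoid.inv_one[of "circG A circ u"] circg by (simp add: circG_def group_def)

lemma circ_z: "a\<in>A \<Longrightarrow> circ a z = a"
proof -
  assume a: "a \<in> A"
  define cz where "cz = circ a z"
  have cz: "cz \<in> A" using a cz_def by simp
  have "cz = pl (pl cz (neg a)) cz" using distr[OF a z_in z_in] cz_def by simp
  also have "\<dots> = pl cz (pl (neg a) cz)" using cz a by (simp add: pl_assoc)
  finally have "pl cz z = pl cz (pl (neg a) cz)" using cz by simp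
  then have "z = pl (neg a) cz" using cz a pl_cancel_l[of cz z "pl (neg a) cz"] by simp
  then have "pl a z = pl a (pl (neg a) cz)" by simp
  then have "pl a z = cz" using a cz by simp
  then show ?thesis using a cz_def by simp
qed

lemma z_eq_u: "z = u"
proof -
  have "circ z z = circ z u" using circ_z[of z] by simp
  then have "circ (ci z) (circ z z) = circ (ci z) (circ z u)" by simp
  then show ?thesis by simp
qed

lemma lam_def': "lam a b = pl (neg a) (circ a b)" by (simp add: brace_lambda_def)
lemma lam_closed[simp]: "a\<in>A \<Longrightarrow> b\<in>A \<Longrightarrow> lam a b \<in> A" by (simp add: lam_def')
lemma circ_lam: "a\<in>A \<Longrightarrow> b\<in>A \<Longrightarrow> circ a b = pl a (lam a b)" by (simp add: lam_def')
lemma lam_pl: "a\<in>A \<Longrightarrow> b\<in>A \<Longrightarrow> c\<in>A \<Longrightarrow> lam a (pl b c) = pl (lam a b) (lam a c)"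
proof -
  assume a: "a\<in>A" "b\<in>A" "c\<in>A"
  have "lam a (pl b c) = pl (neg a) (pl (pl (circ a b) (neg a)) (circ a c))" using a by (simp add: lam_def' distr)
  also have "\<dots> = pl (pl (neg a) (circ a b)) (pl (neg a) (circ a c))"
    using a by (simp only: pl_ac neg_closed circ_closed pl_closed)
  finally show ?thesis by (simp add: lam_def')
qed
lemma lam_z[simp]: "a\<in>A \<Longrightarrow> lam a z = z"
  by (simp add: lam_def' circ_z)
lemma lam_neg: "a\<in>A \<Longrightarrow> b\<in>A \<Longrightarrow> lam a (neg b) = neg (lam a b)"
proof -
  assume a: "a\<in>A" "b\<in>A"
  have "pl (lam a b) (lam a (neg b)) = z" using a lam_pl[of a b "neg b"] by simp
  then show ?thesis using a by (metis neg_unique lam_closed neg_closed)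
qed
lemma neg_u[simp]: "neg u = z" using neg_z z_eq_u by simp
lemma lam_u[simp]: "c\<in>A \<Longrightarrow> lam u c = c"
  by (simp add: lam_def')
lemma lam_zl[simp]: "c\<in>A \<Longrightarrow> lam z c = c"
  using lam_u z_eq_u by simp
lemma lam_comp: "a\<in>A \<Longrightarrow> b\<in>A \<Longrightarrow> c\<in>A \<Longrightarrow> lam (circ a b) c = lam a (lam b c)"
proof -
  assume a: "a\<in>A" "b\<in>A" "c\<in>A"
  have "circ (circ a b) c = circ a (pl b (lam b c))" using a by (simp add: circ_lam[of b c])
  also have "\<dots> = pl (circ a b) (lam a (lam b c))" using a by (simp add: distr circ_lam[of a "lam b c"] pl_assoc)
  finally have e: "circ (circ a b) c = pl (circ a b) (lam a (lam b c))" .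
  have "lam (circ a b) c = pl (neg (circ a b)) (circ (circ a b) c)" by (simp only: lam_def')
  also have "\<dots> = lam a (lam b c)" by (simp only: e neg_l2 a circ_closed lam_closed)
  finally show ?thesis .
qed
lemma lam_ci_lam[simp]: "a\<in>A \<Longrightarrow> c\<in>A \<Longrightarrow> lam (ci a) (lam a c) = c"
  by (metis lam_comp ci_closed ci_l lam_u)
lemma lam_lam_ci[simp]: "a\<in>A \<Longrightarrow> c\<in>A \<Longrightarrow> lam a (lam (ci a) c) = c"
  by (metis lam_comp ci_closed ci_r lam_u)
lemma pl_u: "a\<in>A \<Longrightarrow> pl a u = a"
  using z_r[of a] by (simp only: z_eq_u[symmetric])
lemma lam_self_ci: "a\<in>A \<Longrightarrow> lam a (ci a) = neg a"
proof -
  assume a: "a \<in> A"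
  have "lam a (ci a) = pl (neg a) u" using a by (simp add: lam_def')
  also have "\<dots> = neg a" using a z_eq_u[symmetric] by simp
  finally show ?thesis .
qed
lemma lam_ci_self: "a\<in>A \<Longrightarrow> lam (ci a) a = neg (ci a)"
proof -
  assume a: "a \<in> A"
  have "lam (ci a) a = pl (neg (ci a)) u" using a by (simp add: lam_def')
  also have "\<dots> = neg (ci a)" using a pl_u by simp
  finally show ?thesis .
qed
lemma lam_inj: "a\<in>A \<Longrightarrow> inj_on (lam a) A"
  by (metis inj_onI lam_ci_lam)

lemma decomp_eq: "a\<in>A \<Longrightarrow> b\<in>A \<Longrightarrow> decomp_cs_op A pl z circ a b = lam (ci a) b"
  unfolding decomp_cs_op_def
  by (rule inv_into_f_eq[OF lam_inj]) auto

end


context cb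
begin

lemma u_pl[simp]: "a\<in>A \<Longrightarrow> pl u a = a"
  using z_l[of a] by (simp only: z_eq_u[symmetric])

lemma conj_formula:
  assumes c: "c\<in>A" and x: "x\<in>A"
  shows "circ (circ c x) (ci c) = pl (lam c x) (lam c (pl (lam x (ci c)) (neg (ci c))))"
proof -
  define t where "t = pl (lam x (ci c)) (neg (ci c))"
  have t: "t \<in> A" using c x t_def by simp
  have lx: "lam x (ci c) = pl (ci c) t" using c x t_def by (simp add: pl_ac)
  have "circ (circ c x) (ci c) = circ c (circ x (ci c))" using c x by simp
  also have "\<dots> = circ c (pl x (pl (ci c) t))" using c x lx by (simp add: circ_lam[of x "ci c"])
  also have "\<dots> = pl (pl (circ c x) (neg c)) (circ c (pl (ci c) t))" using c x t by (simp add: distr)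
  also have "circ c (pl (ci c) t) = pl (pl u (neg c)) (circ c t)" using c t by (simp add: distr)
  also have "\<dots> = lam c t" using c t by (simp add: lam_def')
  also have "pl (circ c x) (neg c) = lam c x" using c x by (simp add: lam_def' pl_comm)
  finally show ?thesis using t_def by simp
qed

definition sideal :: "'a set \<Rightarrow> bool" where
  "sideal J \<longleftrightarrow> J \<subseteq> A \<and> z \<in> J \<and> (\<forall>x\<in>J. \<forall>y\<in>J. pl x y \<in> J) \<and> (\<forall>x\<in>J. neg x \<in> J)
     \<and> (\<forall>c\<in>A. \<forall>x\<in>J. lam c x \<in> J) \<and> (\<forall>x\<in>J. \<forall>d\<in>A. pl (lam x d) (neg d) \<in> J)"

definition stp :: "'a set \<Rightarrow> 'a set" where
  "stp J = {x\<in>A. \<forall>d\<in>A. pl (lam x d) (neg d) \<in> J}"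

lemma stp_mono: "J \<subseteq> K \<Longrightarrow> stp J \<subseteq> stp K"
  unfolding stp_def by blast

context
  fixes J assumes sJ: "sideal J"
begin

lemma J_sub: "x \<in> J \<Longrightarrow> x \<in> A" using sJ unfolding sideal_def by blast
lemma J_z: "z \<in> J" using sJ unfolding sideal_def by blast
lemma J_pl: "x \<in> J \<Longrightarrow> y \<in> J \<Longrightarrow> pl x y \<in> J" using sJ unfolding sideal_def by blast
lemma J_neg: "x \<in> J \<Longrightarrow> neg x \<in> J" using sJ unfolding sideal_def by blast
lemma J_lam: "c \<in> A \<Longrightarrow> x \<in> J \<Longrightarrow> lam c x \<in> J" using sJ unfolding sideal_def by blast
lemma J_soc: "x \<in> J \<Longrightarrow> d \<in> A \<Longrightarrow> pl (lam x d) (neg d) \<in> J" using sJ unfolding sideal_def by blast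

lemma J_lam_iff: "c \<in> A \<Longrightarrow> x \<in> A \<Longrightarrow> lam c x \<in> J \<longleftrightarrow> x \<in> J"
  by (metis J_lam ci_closed lam_ci_lam)

lemma J_neg_iff: "x \<in> A \<Longrightarrow> neg x \<in> J \<longleftrightarrow> x \<in> J"
  by (metis J_neg neg_neg)

lemma J_circ: "x \<in> J \<Longrightarrow> y \<in> J \<Longrightarrow> circ x y \<in> J"
  using J_sub by (simp add: circ_lam J_pl J_lam)

lemma J_ci: "x \<in> J \<Longrightarrow> ci x \<in> J"
proof -
  assume x: "x \<in> J"
  have xA: "x \<in> A" using x J_sub by blast
  have "lam (ci x) x \<in> J" using J_lam x xA by simp
  then have "neg (ci x) \<in> J" using lam_ci_self xA by simp
  then show ?thesis using J_neg_iff xA by simp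
qed

lemma J_normal: "c \<in> A \<Longrightarrow> x \<in> J \<Longrightarrow> circ (circ c x) (ci c) \<in> J"
proof -
  assume c: "c \<in> A" and x: "x \<in> J"
  have xA: "x \<in> A" using x J_sub by blast
  show ?thesis using conj_formula[OF c xA] J_pl J_lam J_soc c x xA by simp
qed

lemma J_S4: "a \<in> A \<Longrightarrow> b \<in> A \<Longrightarrow> circ (ci a) b \<in> J \<longleftrightarrow> pl (neg a) b \<in> J"
proof -
  assume a: "a \<in> A" "b \<in> A"
  have "lam a (circ (ci a) b) = pl (neg a) b" using a by (simp add: lam_def')
  then show ?thesis using J_lam_iff a by (metis ci_closed circ_closed)
qed

lemma J_rel_sym: "a \<in> A \<Longrightarrow> b \<in> A \<Longrightarrow> pl (neg a) b \<in> J \<Longrightarrow> pl (neg b) a \<in> J"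
proof -
  assume a: "a \<in> A" "b \<in> A" "pl (neg a) b \<in> J"
  have "neg (pl (neg a) b) = pl (neg b) a" using a by (simp add: pl_comm)
  then show ?thesis using a J_neg by metis
qed

lemma J_rel_trans: "a \<in> A \<Longrightarrow> b \<in> A \<Longrightarrow> c \<in> A \<Longrightarrow> pl (neg a) b \<in> J \<Longrightarrow> pl (neg b) c \<in> J \<Longrightarrow> pl (neg a) c \<in> J"
proof -
  assume a: "a \<in> A" "b \<in> A" "c \<in> A" "pl (neg a) b \<in> J" "pl (neg b) c \<in> J"
  have "pl (pl (neg a) b) (pl (neg b) c) = pl (neg a) c" using a by (simp add: pl_assoc)
  then show ?thesis using a J_pl by metis
qed

lemma J_U2: "p \<in> A \<Longrightarrow> q \<in> A \<Longrightarrow> circ p (ci q) \<in> J \<longleftrightarrow> circ (ci p) q \<in> J"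
proof
  assume a: "p \<in> A" "q \<in> A"
  {
    assume "circ p (ci q) \<in> J"
    then have "ci (circ p (ci q)) \<in> J" using J_ci by blast
    then have "circ q (ci p) \<in> J" using a by simp
    then have "circ (circ (ci p) (circ q (ci p))) (ci (ci p)) \<in> J" using J_normal[OF ci_closed[OF a(1)]] by blast
    then show "circ (ci p) q \<in> J" using a by simp
  }
  {
    assume "circ (ci p) q \<in> J"
    then have "circ (circ p (circ (ci p) q)) (ci p) \<in> J" using J_normal[OF a(1)] by blast
    then have "circ q (ci p) \<in> J" using a by simp
    then have "ci (circ q (ci p)) \<in> J" using J_ci by blast
    then show "circ p (ci q) \<in> J" using a by simp
  }
qed

lemma J_U1: "p \<in> A \<Longrightarrow> q \<in> A \<Longrightarrow>
   (\<forall>c\<in>A. pl (neg (circ (ci p) c)) (circ (ci q) c) \<in> J) \<longleftrightarrow> pl (neg p) q \<in> J"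
proof -
  assume a: "p \<in> A" "q \<in> A"
  have e: "pl (neg (circ (ci p) c)) (circ (ci q) c) \<in> J \<longleftrightarrow> circ (ci c) (circ (circ p (ci q)) c) \<in> J"
    if c: "c \<in> A" for c
    using J_S4[of "circ (ci p) c" "circ (ci q) c"] a c by simp
  have "(\<forall>c\<in>A. circ (ci c) (circ (circ p (ci q)) c) \<in> J) \<longleftrightarrow> circ p (ci q) \<in> J"
  proof
    assume "\<forall>c\<in>A. circ (ci c) (circ (circ p (ci q)) c) \<in> J"
    then show "circ p (ci q) \<in> J" using a by (metis u_in ci_u u_l u_r ci_closed circ_closed)
  next
    assume h: "circ p (ci q) \<in> J"
    show "\<forall>c\<in>A. circ (ci c) (circ (circ p (ci q)) c) \<in> J"
    proof
      fix c assume c: "c \<in> A"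
      have "circ (circ (ci c) (circ p (ci q))) (ci (ci c)) \<in> J" using J_normal[OF ci_closed[OF c] h] .
      then show "circ (ci c) (circ (circ p (ci q)) c) \<in> J" using a c by simp
    qed
  qed
  then show ?thesis using e J_U2 J_S4 a by simp
qed

end

end


locale cbc = cb +
  assumes cyc: "cyclic_group (addG A pl z)"
begin

lemma addgrp: "group (addG A pl z)" using addcg by (simp add: comm_group_def)

lemma lam_hom: "a\<in>A \<Longrightarrow> lam a \<in> hom (addG A pl z) (addG A pl z)"
  unfolding hom_def by (auto simp: addG_def lam_pl)

lemma lam_comm: assumes a: "a\<in>A" and b: "b\<in>A" and d: "d\<in>A"
  shows "lam a (lam b d) = lam b (lam a d)"
proof -
  obtain gm where gm: "gm \<in> A" and Ar: "A = range (\<lambda>n::int. gm [^]\<^bsub>addG A pl z\<^esub> n)"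
    using group.cyclic_group[OF addgrp] cyc by (auto simp: addG_def)
  have pw: "\<And>x. x \<in> A \<Longrightarrow> \<exists>n::int. x = gm [^]\<^bsub>addG A pl z\<^esub> n" using Ar by blast
  obtain j :: int where j: "d = gm [^]\<^bsub>addG A pl z\<^esub> j" using pw d by blast
  obtain m :: int where m: "lam b gm = gm [^]\<^bsub>addG A pl z\<^esub> m" using pw[OF lam_closed[OF b gm]] by blast
  obtain k :: int where k: "lam a gm = gm [^]\<^bsub>addG A pl z\<^esub> k" using pw[OF lam_closed[OF a gm]] by blast
  have gmc: "gm \<in> carrier (addG A pl z)" using gm by (simp add: addG_def)
  have hp: "\<And>c (n::int). c \<in> A \<Longrightarrow> lam c (gm [^]\<^bsub>addG A pl z\<^esub> n) = (lam c gm) [^]\<^bsub>addG A pl z\<^esub> n"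
    using hom_int_pow[OF lam_hom _ addgrp addgrp] gmc by blast
  have pp: "\<And>(n::int) l. (gm [^]\<^bsub>addG A pl z\<^esub> n) [^]\<^bsub>addG A pl z\<^esub> l = gm [^]\<^bsub>addG A pl z\<^esub> (n * l)"
    using group.int_pow_pow[OF addgrp gmc] by blast
  have pc: "\<And>n::int. gm [^]\<^bsub>addG A pl z\<^esub> n \<in> A"
    using group.int_pow_closed[OF addgrp gmc] by (simp add: addG_def)
  have s1: "lam b d = gm [^]\<^bsub>addG A pl z\<^esub> (m * j)"
    unfolding j hp[OF b] m pp ..
  have s2: "lam a d = gm [^]\<^bsub>addG A pl z\<^esub> (k * j)"
    unfolding j hp[OF a] k pp ..
  have "lam a (lam b d) = gm [^]\<^bsub>addG A pl z\<^esub> (k * (m * j))"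
    unfolding s1 hp[OF a] k pp ..
  moreover have "lam b (lam a d) = gm [^]\<^bsub>addG A pl z\<^esub> (m * (k * j))"
    unfolding s2 hp[OF b] m pp ..
  ultimately show ?thesis by (simp add: ac_simps)
qed

lemma lam_circ_comm: "a\<in>A \<Longrightarrow> b\<in>A \<Longrightarrow> d\<in>A \<Longrightarrow> lam (circ a b) d = lam (circ b a) d"
  by (simp add: lam_comp lam_comm)

lemma sideal_stp:
  assumes sJ: "sideal J" and sub: "J \<subseteq> stp J"
  shows "sideal (stp J)"
proof -
  let ?K = "stp J"
  have KA: "?K \<subseteq> A" unfolding stp_def by auto
  have Kz: "z \<in> ?K" unfolding stp_def using J_z[OF sJ] by simp
  have Kcirc: "circ x y \<in> ?K" if x: "x \<in> ?K" and y: "y \<in> ?K" for x y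
  proof -
    have xA: "x \<in> A" and yA: "y \<in> A" using x y unfolding stp_def by auto
    have "pl (lam (circ x y) d) (neg d) \<in> J" if d: "d \<in> A" for d
    proof -
      have "pl (lam x (pl (lam y d) (neg d))) (pl (lam x d) (neg d))
          = pl (pl (lam x (lam y d)) (neg (lam x d))) (pl (lam x d) (neg d))"
        using xA yA d by (simp add: lam_pl lam_neg)
      also have "\<dots> = pl (lam x (lam y d)) (neg d)"
        using xA yA d by (simp only: pl_assoc neg_l2 lam_closed neg_closed pl_closed)
      also have "\<dots> = pl (lam (circ x y) d) (neg d)" using xA yA d by (simp add: lam_comp)
      finally have "pl (lam (circ x y) d) (neg d) = pl (lam x (pl (lam y d) (neg d))) (pl (lam x d) (neg d))" by simp
      moreover have "pl (lam y d) (neg d) \<in> J" using y d unfolding stp_def by auto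
      moreover have "pl (lam x d) (neg d) \<in> J" using x d unfolding stp_def by auto
      ultimately show ?thesis using J_pl[OF sJ] J_lam[OF sJ] xA by simp
    qed
    then show ?thesis unfolding stp_def using xA yA by simp
  qed
  have Kci: "ci x \<in> ?K" if x: "x \<in> ?K" for x
  proof -
    have xA: "x \<in> A" using x unfolding stp_def by auto
    have "pl (lam (ci x) d) (neg d) \<in> J" if d: "d \<in> A" for d
    proof -
      define e where "e = lam (ci x) d"
      have e: "e \<in> A" "lam x e = d" using e_def xA d by auto
      have "pl (lam x e) (neg e) \<in> J" using x e unfolding stp_def by auto
      then have "neg (pl (lam x e) (neg e)) \<in> J" using J_neg[OF sJ] by blast
      then show ?thesis using e xA e_def d by (simp add: pl_comm)
    qed
    then show ?thesis unfolding stp_def using xA by simp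
  qed
  have Klamonly: "w \<in> ?K" if x: "x \<in> ?K" and w: "w \<in> A" and eq: "\<And>d. d \<in> A \<Longrightarrow> lam w d = lam x d" for x w
    using x w eq unfolding stp_def by auto
  have Klam: "lam c x \<in> ?K" if c: "c \<in> A" and x: "x \<in> ?K" for c x
  proof -
    have xA: "x \<in> A" using x unfolding stp_def by auto
    define t where "t = pl (lam x (ci c)) (neg (ci c))"
    have tJ: "t \<in> J" using x c unfolding stp_def t_def by auto
    have tA: "t \<in> A" using tJ J_sub[OF sJ] by blast
    define w where "w = circ (circ c x) (ci c)"
    have wA: "w \<in> A" using w_def c xA by simp
    have wK: "w \<in> ?K"
    proof (rule Klamonly[OF x wA])
      fix d assume d: "d \<in> A"
      show "lam w d = lam x d" using d c xA unfolding w_def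
        by (simp add: lam_comp lam_comm[of c x])
    qed
    have wf: "w = pl (lam c x) (lam c t)" using conj_formula[OF c xA] w_def t_def by simp
    define s where "s = neg (lam c t)"
    have sJ': "s \<in> J" using J_neg[OF sJ] J_lam[OF sJ] c tJ s_def by simp
    have sA: "s \<in> A" using sJ' J_sub[OF sJ] by blast
    have "lam c x = pl w s" using wf s_def c xA tA by (simp add: pl_assoc)
    also have "\<dots> = circ w (lam (ci w) s)" using wA sA by (simp add: circ_lam)
    finally have e: "lam c x = circ w (lam (ci w) s)" .
    have "lam (ci w) s \<in> ?K" using sub J_lam[OF sJ] sJ' wA by auto
    then show ?thesis using e Kcirc wK by simp
  qed
  have Kpl: "pl x y \<in> ?K" if x: "x \<in> ?K" and y: "y \<in> ?K" for x y
  proof -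
    have xA: "x \<in> A" and yA: "y \<in> A" using x y unfolding stp_def by auto
    have "pl x y = circ x (lam (ci x) y)" using xA yA by (simp add: circ_lam)
    then show ?thesis using Kcirc Klam x y xA by simp
  qed
  have Kneg: "neg x \<in> ?K" if x: "x \<in> ?K" for x
  proof -
    have xA: "x \<in> A" using x unfolding stp_def by auto
    show ?thesis using lam_self_ci[OF xA] Klam[OF xA Kci[OF x]] by simp
  qed
  have Ksoc: "pl (lam x d) (neg d) \<in> ?K" if x: "x \<in> ?K" and d: "d \<in> A" for x d
    using x d sub unfolding stp_def by auto
  show ?thesis unfolding sideal_def using KA Kz by (simp add: Kpl Kneg Klam Ksoc)
qed

primrec soc :: "nat \<Rightarrow> 'a set" where
  "soc 0 = {z}"
| "soc (Suc n) = stp (soc n)"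

lemma soc_props: "sideal (soc n) \<and> soc n \<subseteq> soc (Suc n)"
proof (induction n)
  case 0
  have "sideal {z}" unfolding sideal_def by simp
  moreover have "{z} \<subseteq> stp {z}" unfolding stp_def by auto
  ultimately show ?case by simp
next
  case (Suc n)
  then have "sideal (soc (Suc n))" using sideal_stp by simp
  moreover have "soc (Suc n) \<subseteq> soc (Suc (Suc n))" using Suc stp_mono by simp
  ultimately show ?case by simp
qed

lemma soc_ideal: "sideal (soc n)" using soc_props by blast
lemma soc_sub: "soc n \<subseteq> soc (Suc n)" using soc_props by blast

end


locale cbt = cbc +
  fixes S g
  assumes tcb: "transitive_cycle_base A pl z circ S" and gS: "g \<in> S"
begin

lemma add_one: "one (addG A pl z) = z" by (simp add: addG_def)
lemma add_mult: "monoid.mult (addG A pl z) = pl" by (simp add: addG_def)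

lemma SA: "S \<subseteq> A" using tcb unfolding transitive_cycle_base_def by blast
lemma gA: "g \<in> A" using SA gS by blast
lemma genS: "generate (addG A pl z) S = A" using tcb unfolding transitive_cycle_base_def by blast

lemma S_orbit: "s \<in> S \<Longrightarrow> \<exists>c\<in>A. s = lam c g"
proof -
  assume s: "s \<in> S"
  obtain y where y: "y \<in> S" "S = (\<lambda>a. lam a y) ` A" using tcb unfolding transitive_cycle_base_def by blast
  have yA: "y \<in> A" using y SA by blast
  obtain a0 where a0: "a0 \<in> A" "g = lam a0 y" using gS y by blast
  obtain a where a: "a \<in> A" "s = lam a y" using s y by blast
  have "lam (circ a (ci a0)) g = s" using a a0 yA by (simp add: lam_comp)
  then show ?thesis using a a0 by (metis ci_closed circ_closed)
qed

lemma key: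
  assumes sJ: "sideal J" and x: "x \<in> A" and h: "pl (neg g) (lam x g) \<in> J"
  shows "x \<in> stp J"
proof -
  let ?T = "{d\<in>A. pl (lam x d) (neg d) \<in> J}"
  have hg: "pl (lam x g) (neg g) \<in> J" using h x gA by (simp add: pl_comm)
  have inS: "h \<in> ?T" if hS: "h \<in> S" for h
  proof -
    obtain c where c: "c \<in> A" "h = lam c g" using S_orbit hS by blast
    have "pl (lam x h) (neg h) = lam c (pl (lam x g) (neg g))"
      using c x gA by (simp add: lam_pl lam_neg lam_comm[of x c])
    then show ?thesis using J_lam[OF sJ c(1) hg] c gA by simp
  qed
  have "generate (addG A pl z) S \<subseteq> ?T"
  proof
    fix d assume "d \<in> generate (addG A pl z) S"
    then show "d \<in> ?T"
    proof (induction rule: generate.induct)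
      case one
      then show ?case using J_z[OF sJ] x by (simp add: add_one add_mult)
    next
      case (incl h)
      then show ?case using inS by blast
    next
      case (inv h)
      have hA: "h \<in> A" using inv SA by blast
      have "pl (lam x h) (neg h) \<in> J" using inS inv by blast
      then have "neg (pl (lam x h) (neg h)) \<in> J" using J_neg[OF sJ] by blast
      then show ?case using hA x by (simp add: lam_neg)
    next
      case (eng h1 h2)
      have h1: "h1 \<in> A" "pl (lam x h1) (neg h1) \<in> J" using eng by auto
      have h2: "h2 \<in> A" "pl (lam x h2) (neg h2) \<in> J" using eng by auto
      have "pl (lam x (pl h1 h2)) (neg (pl h1 h2)) = pl (pl (lam x h1) (neg h1)) (pl (lam x h2) (neg h2))"
        using h1 h2 x by (simp add: lam_pl pl_ac)
      then show ?case using h1 h2 J_pl[OF sJ] by (simp add: add_one add_mult)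
    qed
  qed
  then show ?thesis using genS x unfolding stp_def by auto
qed

lemma U3:
  assumes sJ: "sideal J" and sub: "J \<subseteq> stp J" and a: "a \<in> A" and b: "b \<in> A"
  shows "pl (neg (lam a g)) (lam b g) \<in> J \<longleftrightarrow> pl (neg a) b \<in> stp J"
proof -
  define x where "x = circ (ci a) b"
  have xA: "x \<in> A" using x_def a b by simp
  have "lam b g = lam a (lam x g)" using x_def a b gA by (simp add: lam_comp[symmetric])
  then have "pl (neg (lam a g)) (lam b g) = lam a (pl (neg g) (lam x g))"
    using a xA gA by (simp add: lam_pl lam_neg)
  then have "pl (neg (lam a g)) (lam b g) \<in> J \<longleftrightarrow> pl (neg g) (lam x g) \<in> J"
    using J_lam_iff[OF sJ a] xA gA by simp
  also have "\<dots> \<longleftrightarrow> x \<in> stp J"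
  proof
    assume "pl (neg g) (lam x g) \<in> J" then show "x \<in> stp J" using key sJ xA by blast
  next
    assume "x \<in> stp J" then have "pl (lam x g) (neg g) \<in> J" unfolding stp_def using gA by blast
    then show "pl (neg g) (lam x g) \<in> J" using xA gA by (simp add: pl_comm)
  qed
  also have "\<dots> \<longleftrightarrow> pl (neg a) b \<in> stp J"
    using J_S4[OF sideal_stp[OF sJ sub] a b] x_def by simp
  finally show ?thesis .
qed

end


context cbc
begin
lemma diff_lam: "p\<in>A \<Longrightarrow> q\<in>A \<Longrightarrow> x\<in>A \<Longrightarrow>
   pl (neg (lam p x)) (lam q x) = lam p (pl (neg x) (lam (circ (ci p) q) x))"
proof -
  assume a: "p\<in>A" "q\<in>A" "x\<in>A"
  have e: "lam p (lam (circ (ci p) q) x) = lam q x" using lam_comp[of p "circ (ci p) q" x] a by simp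
  have f: "lam p (pl (neg x) (lam (circ (ci p) q) x)) = pl (lam p (neg x)) (lam p (lam (circ (ci p) q) x))"
    using a by (simp only: lam_pl neg_closed lam_closed circ_closed ci_closed)
  show ?thesis using a by (simp only: f e lam_neg)
qed
end

context cbt
begin

definition srel :: "nat \<Rightarrow> 'a \<Rightarrow> 'a \<Rightarrow> bool" where
  "srel n a b \<longleftrightarrow> a \<in> A \<and> b \<in> A \<and> pl (neg a) b \<in> soc n"

lemma srel_dom: "srel n a b \<Longrightarrow> a \<in> A \<and> b \<in> A" unfolding srel_def by blast
lemma srel_refl: "a \<in> A \<Longrightarrow> srel n a a" unfolding srel_def using J_z[OF soc_ideal] by simp
lemma srel_sym: "srel n a b \<Longrightarrow> srel n b a" unfolding srel_def using J_rel_sym[OF soc_ideal] by blast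
lemma srel_trans: "srel n a b \<Longrightarrow> srel n b c \<Longrightarrow> srel n a c" unfolding srel_def using J_rel_trans[OF soc_ideal] by blast
lemma srel_0: "a \<in> A \<Longrightarrow> b \<in> A \<Longrightarrow> srel 0 a b \<longleftrightarrow> a = b"
proof -
  assume a: "a \<in> A" "b \<in> A"
  have "pl (neg a) b = z \<Longrightarrow> a = b"
  proof -
    assume "pl (neg a) b = z"
    then have "pl a (pl (neg a) b) = pl a z" by simp
    then show "a = b" using a by simp
  qed
  then show ?thesis unfolding srel_def using a by auto
qed

lemma hS_d: "a \<in> A \<Longrightarrow> b \<in> A \<Longrightarrow> (\<forall>c\<in>A. srel n (lam (ci a) c) (lam (ci b) c)) \<longleftrightarrow> srel (Suc n) a b"
proof -
  assume a: "a \<in> A" and b: "b \<in> A"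
  let ?J = "soc n"
  have sJ: "sideal ?J" by (rule soc_ideal)
  have sK: "sideal (stp ?J)" using soc_ideal[of "Suc n"] by simp
  have e: "srel n (lam (ci a) c) (lam (ci b) c) \<longleftrightarrow> pl (lam (circ (ci b) a) c) (neg c) \<in> ?J" if c: "c \<in> A" for c
  proof -
    have "pl (neg (lam (ci a) c)) (lam (ci b) c) = lam (ci a) (pl (neg c) (lam (circ a (ci b)) c))"
      using diff_lam[of "ci a" "ci b" c] a b c by simp
    also have "lam (circ a (ci b)) c = lam (circ (ci b) a) c" using a b c lam_circ_comm by simp
    finally have "pl (neg (lam (ci a) c)) (lam (ci b) c) = lam (ci a) (pl (neg c) (lam (circ (ci b) a) c))" .
    then show ?thesis unfolding srel_def using J_lam_iff[OF sJ] a b c by (simp add: pl_comm)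
  qed
  have "(\<forall>c\<in>A. srel n (lam (ci a) c) (lam (ci b) c)) \<longleftrightarrow> circ (ci b) a \<in> stp ?J"
    using e a b unfolding stp_def by auto
  also have "\<dots> \<longleftrightarrow> pl (neg b) a \<in> stp ?J" using J_S4[OF sK b a] .
  also have "\<dots> \<longleftrightarrow> pl (neg a) b \<in> stp ?J" using J_rel_sym[OF sK] a b by blast
  finally show ?thesis unfolding srel_def using a b by simp
qed

lemma cong_d: "srel n a a' \<Longrightarrow> srel n c c' \<Longrightarrow> srel n (lam (ci a) c) (lam (ci a') c')"
proof -
  assume r1: "srel n a a'" and r2: "srel n c c'"
  let ?J = "soc n"
  have sJ: "sideal ?J" by (rule soc_ideal)
  have a: "a \<in> A" "a' \<in> A" "pl (neg a) a' \<in> ?J" using r1 unfolding srel_def by auto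
  have c: "c \<in> A" "c' \<in> A" "pl (neg c) c' \<in> ?J" using r2 unfolding srel_def by auto
  have "pl (neg (lam (ci a) c)) (lam (ci a) c') = lam (ci a) (pl (neg c) c')"
    using a c by (simp add: lam_pl lam_neg)
  then have s1: "srel n (lam (ci a) c) (lam (ci a) c')"
    unfolding srel_def using J_lam[OF sJ] a c by simp
  have "pl (neg (lam (ci a) c')) (lam (ci a') c') = lam (ci a) (pl (neg c') (lam (circ a (ci a')) c'))"
    using diff_lam[of "ci a" "ci a'" c'] a c by simp
  also have "lam (circ a (ci a')) c' = lam (circ (ci a') a) c'" using a c lam_circ_comm by simp
  finally have e: "pl (neg (lam (ci a) c')) (lam (ci a') c') = lam (ci a) (pl (neg c') (lam (circ (ci a') a) c'))" .
  have "circ (ci a') a \<in> ?J" using J_S4[OF sJ a(2) a(1)] J_rel_sym[OF sJ a(1) a(2) a(3)] by simp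
  then have "pl (lam (circ (ci a') a) c') (neg c') \<in> ?J" using J_soc[OF sJ] c by blast
  then have "pl (neg c') (lam (circ (ci a') a) c') \<in> ?J" using a c by (simp add: pl_comm)
  then have s2: "srel n (lam (ci a) c') (lam (ci a') c')"
    unfolding srel_def using e J_lam[OF sJ] a c by simp
  show ?thesis using srel_trans[OF s1 s2] .
qed

lemma hS_u: "a \<in> A \<Longrightarrow> b \<in> A \<Longrightarrow>
   (\<forall>c\<in>A. srel n (circ (ci (lam a g)) c) (circ (ci (lam b g)) c)) \<longleftrightarrow> srel (Suc n) a b"
proof -
  assume a: "a \<in> A" and b: "b \<in> A"
  have "(\<forall>c\<in>A. srel n (circ (ci (lam a g)) c) (circ (ci (lam b g)) c))
     \<longleftrightarrow> (\<forall>c\<in>A. pl (neg (circ (ci (lam a g)) c)) (circ (ci (lam b g)) c) \<in> soc n)"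
    unfolding srel_def using a b gA by simp
  also have "\<dots> \<longleftrightarrow> pl (neg (lam a g)) (lam b g) \<in> soc n"
    using J_U1[OF soc_ideal] a b gA by simp
  also have "\<dots> \<longleftrightarrow> pl (neg a) b \<in> soc (Suc n)"
    using U3[OF soc_ideal _ a b] soc_sub by simp
  finally show ?thesis unfolding srel_def using a b by simp
qed

lemma cong_u: "srel n a a' \<Longrightarrow> srel n c c' \<Longrightarrow> srel n (circ (ci (lam a g)) c) (circ (ci (lam a' g)) c')"
proof -
  assume r1: "srel n a a'" and r2: "srel n c c'"
  let ?J = "soc n"
  have sJ: "sideal ?J" by (rule soc_ideal)
  have a: "a \<in> A" "a' \<in> A" "pl (neg a) a' \<in> ?J" using r1 unfolding srel_def by auto
  have c: "c \<in> A" "c' \<in> A" "pl (neg c) c' \<in> ?J" using r2 unfolding srel_def by auto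
  have "pl (neg a) a' \<in> stp ?J" using a soc_sub[of n] by auto
  then have "pl (neg (lam a g)) (lam a' g) \<in> ?J" using U3[OF sJ _ a(1) a(2)] soc_sub[of n] by simp
  then have "\<forall>c\<in>A. pl (neg (circ (ci (lam a g)) c)) (circ (ci (lam a' g)) c) \<in> ?J"
    using J_U1[OF sJ, of "lam a g" "lam a' g"] a gA by simp
  then have s1: "srel n (circ (ci (lam a g)) c) (circ (ci (lam a' g)) c)"
    unfolding srel_def using a c gA by simp
  have "circ (ci (circ (ci (lam a' g)) c)) (circ (ci (lam a' g)) c') = circ (ci c) c'" using a c gA by simp
  then have "circ (ci (circ (ci (lam a' g)) c)) (circ (ci (lam a' g)) c') \<in> ?J"
    using J_S4[OF sJ c(1) c(2)] c by simp
  then have "pl (neg (circ (ci (lam a' g)) c)) (circ (ci (lam a' g)) c') \<in> ?J"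
    using J_S4[OF sJ, of "circ (ci (lam a' g)) c" "circ (ci (lam a' g)) c'"] a c gA by simp
  then have s2: "srel n (circ (ci (lam a' g)) c) (circ (ci (lam a' g)) c')"
    unfolding srel_def using a c gA by simp
  show ?thesis using srel_trans[OF s1 s2] .
qed

lemma Ret_d: "fst (Ret_iter A (decomp_cs_op A pl z circ) n) = (\<lambda>a. {b\<in>A. srel n a b}) ` A"
proof -
  let ?op = "decomp_cs_op A pl z circ"
  have cl: "\<And>a b. a\<in>A \<Longrightarrow> b\<in>A \<Longrightarrow> ?op a b \<in> A" by (simp add: decomp_eq)
  have hS: "srel (Suc n) a b \<longleftrightarrow> (\<forall>c\<in>A. srel n (?op a c) (?op b c))" if a: "a\<in>A" "b\<in>A" for n a b
  proof -
    have "(\<forall>c\<in>A. srel n (?op a c) (?op b c)) \<longleftrightarrow> (\<forall>c\<in>A. srel n (lam (ci a) c) (lam (ci b) c))"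
      using a decomp_eq[OF a(1)] decomp_eq[OF a(2)] by simp
    then show ?thesis using hS_d[OF a] by simp
  qed
  have cg: "srel n (?op a c) (?op a' c')" if r: "srel n a a'" "srel n c c'" for n a a' c c'
  proof -
    have m: "a \<in> A" "a' \<in> A" "c \<in> A" "c' \<in> A" using srel_dom[OF r(1)] srel_dom[OF r(2)] by auto
    show ?thesis unfolding decomp_eq[OF m(1) m(3)] decomp_eq[OF m(2) m(4)] by (rule cong_d[OF r])
  qed
  show ?thesis using conjunct1[OF Ret_generic[where A=A and op="?op" and R=srel and n=n, OF cl srel_0 hS srel_dom srel_refl srel_sym srel_trans cg]] .
qed

lemma Ret_u: "fst (Ret_iter A (unicon_cs_op A pl z circ u g) n) = (\<lambda>a. {b\<in>A. srel n a b}) ` A"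
proof -
  let ?op = "unicon_cs_op A pl z circ u g"
  have cl: "\<And>a b. a\<in>A \<Longrightarrow> b\<in>A \<Longrightarrow> ?op a b \<in> A" using gA by (simp add: unicon_cs_op_def)
  have hS: "srel (Suc n) a b \<longleftrightarrow> (\<forall>c\<in>A. srel n (?op a c) (?op b c))" if a: "a\<in>A" "b\<in>A" for n a b
    using hS_u[OF a, of n] unfolding unicon_cs_op_def by (rule sym)
  have cg: "\<And>n a a' c c'. srel n a a' \<Longrightarrow> srel n c c' \<Longrightarrow> srel n (?op a c) (?op a' c')"
    unfolding unicon_cs_op_def by (rule cong_u)
  show ?thesis using conjunct1[OF Ret_generic[where A=A and op="?op" and R=srel and n=n, OF cl srel_0 hS srel_dom srel_refl srel_sym srel_trans cg]] .
qed

end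


lemma card_image_iff:
  assumes h: "\<And>a b. a\<in>A \<Longrightarrow> b\<in>A \<Longrightarrow> f a = f b \<longleftrightarrow> k a = k b"
  shows "card (f ` A) = card (k ` A)"
proof -
  have "bij_betw (\<lambda>K. f (inv_into A k K)) (k ` A) (f ` A)"
  proof (rule bij_betw_imageI)
    show "inj_on (\<lambda>K. f (inv_into A k K)) (k ` A)"
    proof (rule inj_onI)
      fix K1 K2 assume K: "K1 \<in> k ` A" "K2 \<in> k ` A" "f (inv_into A k K1) = f (inv_into A k K2)"
      have m1: "inv_into A k K1 \<in> A" by (rule inv_into_into[OF K(1)])
      have m2: "inv_into A k K2 \<in> A" by (rule inv_into_into[OF K(2)])
      have "k (inv_into A k K1) = k (inv_into A k K2)" using h[OF m1 m2] K(3) by simp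
      then show "K1 = K2" using f_inv_into_f[OF K(1)] f_inv_into_f[OF K(2)] by simp
    qed
  next
    have e: "f (inv_into A k (k a)) = f a" if a: "a \<in> A" for a
    proof -
      have ka: "k a \<in> k ` A" using a by (rule imageI)
      have m: "inv_into A k (k a) \<in> A" by (rule inv_into_into[OF ka])
      have "k (inv_into A k (k a)) = k a" by (rule f_inv_into_f[OF ka])
      then show ?thesis using h[OF m a] by simp
    qed
    have "(\<lambda>K. f (inv_into A k K)) ` k ` A = (\<lambda>a. f (inv_into A k (k a))) ` A"
      by (simp only: image_image)
    also have "\<dots> = f ` A" using e by (rule image_cong[OF refl])
    finally show "(\<lambda>K. f (inv_into A k K)) ` k ` A = f ` A" .
  qed
  then show ?thesis by (rule bij_betw_same_card[symmetric])
qed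

context cbt
begin

lemma gen_sub: assumes sJ: "sideal J" and SJ: "S \<subseteq> J" shows "A \<subseteq> J"
proof -
  have "generate (addG A pl z) S \<subseteq> J"
  proof
    fix d assume "d \<in> generate (addG A pl z) S"
    then show "d \<in> J"
    proof (induction rule: generate.induct)
      case one then show ?case using J_z[OF sJ] by (simp add: add_one)
    next
      case (incl h) then show ?case using SJ by blast
    next
      case (inv h) then show ?case using SJ J_neg[OF sJ] by blast
    next
      case (eng h1 h2) then show ?case using J_pl[OF sJ] by (simp add: add_mult)
    qed
  qed
  then show ?thesis using genS by simp
qed

lemma cls_eq: "a \<in> A \<Longrightarrow> b \<in> A \<Longrightarrow> {x\<in>A. srel n a x} = {x\<in>A. srel n b x} \<longleftrightarrow> srel n a b"
proof
  assume a: "a \<in> A" "b \<in> A" and e: "{x\<in>A. srel n a x} = {x\<in>A. srel n b x}"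
  have "b \<in> {x\<in>A. srel n b x}" using a srel_refl by simp
  then have "b \<in> {x\<in>A. srel n a x}" using e by simp
  then show "srel n a b" by simp
next
  assume a: "a \<in> A" "b \<in> A" and r: "srel n a b"
  show "{x\<in>A. srel n a x} = {x\<in>A. srel n b x}"
    using r srel_sym srel_trans by blast
qed

lemma soc_grow: assumes ne: "soc n \<noteq> A" and fin: "finite A" shows "soc (Suc n) \<noteq> soc n"
proof
  assume eq: "soc (Suc n) = soc n"
  define cls where "cls a = {x\<in>A. srel n a x}" for a
  have iff: "cls (lam a g) = cls (lam b g) \<longleftrightarrow> cls a = cls b" if a: "a \<in> A" "b \<in> A" for a b
  proof -
    have la: "lam a g \<in> A" "lam b g \<in> A" using a gA by auto
    have "cls (lam a g) = cls (lam b g) \<longleftrightarrow> srel n (lam a g) (lam b g)"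
      unfolding cls_def by (rule cls_eq[OF la])
    also have "\<dots> \<longleftrightarrow> pl (neg (lam a g)) (lam b g) \<in> soc n" unfolding srel_def using la by blast
    also have "\<dots> \<longleftrightarrow> pl (neg a) b \<in> stp (soc n)" by (rule U3[OF soc_ideal _ a(1) a(2)]) (use soc_sub[of n] in simp)
    also have "\<dots> \<longleftrightarrow> pl (neg a) b \<in> soc n" using eq by simp
    also have "\<dots> \<longleftrightarrow> srel n a b" unfolding srel_def using a by blast
    also have "\<dots> \<longleftrightarrow> cls a = cls b" unfolding cls_def by (rule cls_eq[OF a, symmetric])
    finally show ?thesis .
  qed
  have cd: "card ((\<lambda>a. cls (lam a g)) ` A) = card (cls ` A)"
  proof (rule card_image_iff)
    fix a b assume "a \<in> A" "b \<in> A"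
    then show "cls (lam a g) = cls (lam b g) \<longleftrightarrow> cls a = cls b" by (rule iff)
  qed
  have sub: "(\<lambda>a. cls (lam a g)) ` A \<subseteq> cls ` A"
  proof
    fix Y assume "Y \<in> (\<lambda>a. cls (lam a g)) ` A"
    then obtain a where "a \<in> A" "Y = cls (lam a g)" by blast
    then show "Y \<in> cls ` A" using gA by simp
  qed
  have eqi: "(\<lambda>a. cls (lam a g)) ` A = cls ` A"
    using card_subset_eq[OF finite_imageI[OF fin] sub cd] .
  have "cls z \<in> (\<lambda>a. cls (lam a g)) ` A" unfolding eqi using z_in by (rule imageI)
  then obtain a where a: "a \<in> A" "cls (lam a g) = cls z" by blast
  then have "srel n (lam a g) z" using cls_eq[of "lam a g" z n] gA unfolding cls_def by simp
  then have "srel n z (lam a g)" by (rule srel_sym)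
  then have "lam a g \<in> soc n" unfolding srel_def using a gA by simp
  then have gJ: "g \<in> soc n" using J_lam_iff[OF soc_ideal a(1) gA] by simp
  have "S \<subseteq> soc n"
  proof
    fix s assume "s \<in> S"
    then obtain c where "c \<in> A" "s = lam c g" using S_orbit by blast
    then show "s \<in> soc n" using J_lam[OF soc_ideal _ gJ] by simp
  qed
  then have "A \<subseteq> soc n" using gen_sub[OF soc_ideal] by blast
  moreover have "soc n \<subseteq> A" using J_sub[OF soc_ideal] by blast
  ultimately show False using ne by blast
qed

lemma ex_soc_A: assumes fin: "finite A" shows "\<exists>n. soc n = A"
proof -
  have "soc n = A \<or> n < card (soc n)" for n
  proof (induction n)
    case 0 show ?case by simp
  next
    case (Suc n)
    show ?case
    proof (cases "soc n = A")
      case True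
      have "soc (Suc n) \<subseteq> A" using J_sub[OF soc_ideal] by blast
      then show ?thesis using True soc_sub[of n] by blast
    next
      case False
      then have lt: "n < card (soc n)" using Suc by blast
      have "soc n \<subset> soc (Suc n)" using soc_sub[of n] soc_grow[OF False fin] by blast
      moreover have "finite (soc (Suc n))"
        by (rule finite_subset[OF _ fin]) (use J_sub[OF soc_ideal] in blast)
      ultimately have "card (soc n) < card (soc (Suc n))" by (rule psubset_card_mono[rotated])
      then show ?thesis using lt by simp
    qed
  qed
  then have "soc (card A) = A \<or> card A < card (soc (card A))" .
  moreover have "card (soc (card A)) \<le> card A" using J_sub[OF soc_ideal] fin by (intro card_mono) auto
  ultimately show ?thesis by (meson not_le)
qed

lemma classes_A: "soc n = A \<Longrightarrow> (\<lambda>a. {b\<in>A. srel n a b}) ` A = {A}"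
proof -
  assume e: "soc n = A"
  have "{b\<in>A. srel n a b} = A" if a: "a \<in> A" for a
  proof (intro equalityI subsetI)
    fix b assume "b \<in> {b\<in>A. srel n a b}" then show "b \<in> A" by blast
  next
    fix b assume b: "b \<in> A"
    have "pl (neg a) b \<in> A" using a b by simp
    then show "b \<in> {b\<in>A. srel n a b}" unfolding srel_def e using a b by blast
  qed
  then have "(\<lambda>a. {b\<in>A. srel n a b}) ` A = (\<lambda>a. A) ` A" by (rule image_cong[OF refl])
  also have "\<dots> = {A}" by (rule image_constant[OF z_in])
  finally show ?thesis .
qed

end

theorem mainTheorem5:
  fixes A :: "'a set" and pl circ :: "'a \<Rightarrow> 'a \<Rightarrow> 'a" and z u g :: 'a and S :: "'a set"
  assumes "left_brace A pl z circ u"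
    and "finite A"
    and "cyclic_group (addG A pl z)"
    and "transitive_cycle_base A pl z circ S"
    and "g \<in> S"
  shows "finite_mpl A (decomp_cs_op A pl z circ)
       \<and> finite_mpl A (unicon_cs_op A pl z circ u g)
       \<and> mpl A (decomp_cs_op A pl z circ) = mpl A (unicon_cs_op A pl z circ u g)
       \<and> (\<forall>n. fst (Ret_iter A (decomp_cs_op A pl z circ) n)
              = fst (Ret_iter A (unicon_cs_op A pl z circ u g) n))"
proof -
  have loc: "cbt A pl z circ u S g"
    by (intro cbt.intro cbc.intro cb.intro cbc_axioms.intro cbt_axioms.intro assms)
  interpret cbt A pl z circ u S g by (rule loc)
  obtain n0 where n0: "soc n0 = A" using ex_soc_A assms(2) by blast
  have eq: "\<forall>n. fst (Ret_iter A (decomp_cs_op A pl z circ) n)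
              = fst (Ret_iter A (unicon_cs_op A pl z circ u g) n)"
    by (intro allI) (simp only: Ret_d Ret_u)
  have c1: "card (fst (Ret_iter A (decomp_cs_op A pl z circ) n0)) = 1"
    unfolding Ret_d classes_A[OF n0] by (rule is_singletonI[unfolded is_singleton_altdef])
  have c2: "card (fst (Ret_iter A (unicon_cs_op A pl z circ u g) n0)) = 1"
    unfolding Ret_u classes_A[OF n0] by (rule is_singletonI[unfolded is_singleton_altdef])
  have f1: "finite_mpl A (decomp_cs_op A pl z circ)" unfolding finite_mpl_def using c1 by blast
  have f2: "finite_mpl A (unicon_cs_op A pl z circ u g)" unfolding finite_mpl_def using c2 by blast
  have m: "mpl A (decomp_cs_op A pl z circ) = mpl A (unicon_cs_op A pl z circ u g)"
    unfolding mpl_def eq[rule_format] ..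
  show ?thesis using f1 f2 m eq by blast
qed

end
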